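(* Let $R$ be a commutative domain, $B=R(t,\sigma,H,J)$, assume $\sigma^n=\mathrm{id}_R$ and let $\mathcal O$ be a $\sigma$-orbit in $\operatorname{Maxspec}(R)$ of size $n$ containing at least one break. Let $M$ be a simple $B$-module which is an $R$-weight module with $\operatorname{Supp}_R(M)\subseteq\mathcal O$, and let $\mathfrak m\in\mathcal O$ be a break. Then $\mathfrak m$ is not both a $J$-break and an $H$-break for $M$. If $\mathfrak m$ is a $J$-break (resp. $H$-break) for $M$, then every break in $\mathcal O$ is a $J$-break (resp. $H$-break) for $M$, and $\operatorname{Supp}_R(M)=\mathcal O$.
   Context: $\Bbbk$ is a field; all algebras are associative unital $\Bbbk$-algebras. For an algebra $R$ and $\sigma\in\operatorname{Aut}_\Bbbk(R)$, $R[t,t^{-1};\sigma]$ is the skew Laurent ring: generated over $R$ by $t,t^{-1}$ with $tt^{-1}=t^{-1}t=1$ and $t^{\pm1}r=\sigma^{\pm1}(r)t^{\pm1}$ for $r\in R$. Given two-sided ideals $H,J$ of $R$, set $I^{(0)}=R$, $I^{(n)}=J\sigma(J)\cdots\sigma^{n-1}(J)$ for $n\ge1$, and $I^{(n)}=\sigma^{-1}(H)\sigma^{-2}(H)\cdots\sigma^{n}(H)$ for $n\le-1$; it is assumed throughout that $I^{(n)}\neq0$ for all $n\in\mathbb Z$. The Bell–Rogalski (BR) algebra is $R(t,\sigma,H,J)=\bigoplus_{n\in\mathbb Z}I^{(n)}t^n\subseteq R[t,t^{-1};\sigma]$. For $R$ commutative, $\mathcal S(B)=\{\mathfrak p\in\operatorname{Spec}(R):\mathfrak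 p\supseteq HJ\}$; a maximal ideal $\mathfrak m$ is a break if $\sigma(\mathfrak m)\in\mathcal S(B)$. A left $B$-module $M$ is an $R$-weight module if $M=\bigoplus_{\mathfrak m}M_{\mathfrak m}$, $M_{\mathfrak m}=\{v:\mathfrak mv=0\}$, each $\dim_{R/\mathfrak m}M_{\mathfrak m}<\infty$; $\operatorname{Supp}_R(M)=\{\mathfrak m:M_{\mathfrak m}\ne0\}$. $\sigma$-orbits are orbits of $k\cdot\mathfrak m=\sigma^k(\mathfrak m)$. For a weight module $M$ and a break $\mathfrak m$: $\mathfrak m$ is a $J$-break for $M$ if there exist $j\in J$ and $v\in M_{\mathfrak m}$ with $(jt)v\neq0$; $\mathfrak m$ is an $H$-break for $M$ if there exist $h\in H$ and $w\in M_{\sigma(\mathfrak m)}$ with $(\sigma^{-1}(h)t^{-1})w\neq0$. *)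

theory Defs
  imports Main
begin

definition is_ideal :: "'r::comm_ring_1 set \<Rightarrow> bool" where
  "is_ideal I \<longleftrightarrow> 0 \<in> I \<and> (\<forall>a\<in>I. \<forall>b\<in>I. a + b \<in> I) \<and> (\<forall>r a. a \<in> I \<longrightarrow> r * a \<in> I)"

definition ideal_prod :: "'r::comm_ring_1 set \<Rightarrow> 'r set \<Rightarrow> 'r set" where
  "ideal_prod I J = \<Inter>{K. is_ideal K \<and> {a * b | a b. a \<in> I \<and> b \<in> J} \<subseteq> K}"

definition maximal_ideal :: "'r::comm_ring_1 set \<Rightarrow> bool" where
  "maximal_ideal m \<longleftrightarrow> is_ideal m \<and> m \<noteq> UNIV \<and>
     (\<forall>K. is_ideal K \<and> m \<subseteq> K \<longrightarrow> K = m \<or> K = UNIV)"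

definition prime_ideal :: "'r::comm_ring_1 set \<Rightarrow> bool" where
  "prime_ideal p \<longleftrightarrow> is_ideal p \<and> p \<noteq> UNIV \<and> (\<forall>a b. a * b \<in> p \<longrightarrow> a \<in> p \<or> b \<in> p)"

definition ring_aut :: "('r::comm_ring_1 \<Rightarrow> 'r) \<Rightarrow> bool" where
  "ring_aut \<sigma> \<longleftrightarrow> bij \<sigma> \<and> (\<forall>a b. \<sigma> (a + b) = \<sigma> a + \<sigma> b) \<and>
     (\<forall>a b. \<sigma> (a * b) = \<sigma> a * \<sigma> b) \<and> \<sigma> 1 = 1"

definition alg_struct :: "('k::field \<Rightarrow> 'r::comm_ring_1) \<Rightarrow> bool" where
  "alg_struct \<phi> \<longleftrightarrow> (\<forall>a b. \<phi> (a + b) = \<phi> a + \<phi> b) \<and> (\<forall>a b. \<phi> (a * b) = \<phi> a * \<phi> b) \<and> \<phi> 1 = 1"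

definition sigma_pow :: "('r \<Rightarrow> 'r) \<Rightarrow> int \<Rightarrow> 'r \<Rightarrow> 'r" where
  "sigma_pow \<sigma> k = (if 0 \<le> k then \<sigma> ^^ nat k else inv \<sigma> ^^ nat (- k))"

fun Ipos :: "('r::comm_ring_1 \<Rightarrow> 'r) \<Rightarrow> 'r set \<Rightarrow> nat \<Rightarrow> 'r set" where
  "Ipos \<sigma> J 0 = UNIV"
| "Ipos \<sigma> J (Suc k) = ideal_prod (Ipos \<sigma> J k) ((\<sigma> ^^ k) ` J)"

fun Ineg :: "('r::comm_ring_1 \<Rightarrow> 'r) \<Rightarrow> 'r set \<Rightarrow> nat \<Rightarrow> 'r set" where
  "Ineg \<sigma> H 0 = UNIV"
| "Ineg \<sigma> H (Suc k) = ideal_prod (Ineg \<sigma> H k) (sigma_pow \<sigma> (- (int k + 1)) ` H)"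

definition Iseq :: "('r::comm_ring_1 \<Rightarrow> 'r) \<Rightarrow> 'r set \<Rightarrow> 'r set \<Rightarrow> int \<Rightarrow> 'r set" where
  "Iseq \<sigma> H J n = (if 0 \<le> n then Ipos \<sigma> J (nat n) else Ineg \<sigma> H (nat (- n)))"

text \<open>Elements of the skew Laurent ring R[t,t^-1;sigma]: finitely supported
  coefficient functions  n \<mapsto> coefficient of t^n.\<close>
definition monom :: "'r::zero \<Rightarrow> int \<Rightarrow> int \<Rightarrow> 'r" where
  "monom r k = (\<lambda>n. if n = k then r else 0)"

definition sl_mult :: "('r::comm_ring_1 \<Rightarrow> 'r) \<Rightarrow> (int \<Rightarrow> 'r) \<Rightarrow> (int \<Rightarrow> 'r) \<Rightarrow> int \<Rightarrow> 'r" where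
  "sl_mult \<sigma> f g = (\<lambda>n. \<Sum>k\<in>{k. f k \<noteq> 0}. f k * sigma_pow \<sigma> k (g (n - k)))"

definition BR :: "('r::comm_ring_1 \<Rightarrow> 'r) \<Rightarrow> 'r set \<Rightarrow> 'r set \<Rightarrow> (int \<Rightarrow> 'r) set" where
  "BR \<sigma> H J = {f. finite {n. f n \<noteq> 0} \<and> (\<forall>n. f n \<in> Iseq \<sigma> H J n)}"

definition bmodule :: "('r::comm_ring_1 \<Rightarrow> 'r) \<Rightarrow> 'r set \<Rightarrow> 'r set \<Rightarrow>
    ((int \<Rightarrow> 'r) \<Rightarrow> 'm::ab_group_add \<Rightarrow> 'm) \<Rightarrow> bool" where
  "bmodule \<sigma> H J act \<longleftrightarrow>
     (\<forall>f\<in>BR \<sigma> H J. \<forall>v w. act f (v + w) = act f v + act f w) \<and>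
     (\<forall>f\<in>BR \<sigma> H J. \<forall>g\<in>BR \<sigma> H J. \<forall>v. act (\<lambda>n. f n + g n) v = act f v + act g v) \<and>
     (\<forall>f\<in>BR \<sigma> H J. \<forall>g\<in>BR \<sigma> H J. \<forall>v. act (sl_mult \<sigma> f g) v = act f (act g v)) \<and>
     (\<forall>v. act (monom 1 0) v = v)"

definition bsubmodule :: "('r::comm_ring_1 \<Rightarrow> 'r) \<Rightarrow> 'r set \<Rightarrow> 'r set \<Rightarrow>
    ((int \<Rightarrow> 'r) \<Rightarrow> 'm::ab_group_add \<Rightarrow> 'm) \<Rightarrow> 'm set \<Rightarrow> bool" where
  "bsubmodule \<sigma> H J act N \<longleftrightarrow> 0 \<in> N \<and> (\<forall>v\<in>N. \<forall>w\<in>N. v + w \<in> N) \<and> (\<forall>v\<in>N. - v \<in> N) \<and>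
     (\<forall>f\<in>BR \<sigma> H J. \<forall>v\<in>N. act f v \<in> N)"

definition simple_bmodule :: "('r::comm_ring_1 \<Rightarrow> 'r) \<Rightarrow> 'r set \<Rightarrow> 'r set \<Rightarrow>
    ((int \<Rightarrow> 'r) \<Rightarrow> 'm::ab_group_add \<Rightarrow> 'm) \<Rightarrow> bool" where
  "simple_bmodule \<sigma> H J act \<longleftrightarrow> bmodule \<sigma> H J act \<and> (\<exists>v::'m. v \<noteq> 0) \<and>
     (\<forall>N. bsubmodule \<sigma> H J act N \<longrightarrow> N = {0} \<or> N = UNIV)"

text \<open>R acts on M through r \<mapsto> r t^0.\<close>
definition weight_space :: "((int \<Rightarrow> 'r::comm_ring_1) \<Rightarrow> 'm::ab_group_add \<Rightarrow> 'm) \<Rightarrow> 'r set \<Rightarrow> 'm set" where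
  "weight_space act m = {v. \<forall>r\<in>m. act (monom r 0) v = 0}"

text \<open>R-weight module: M is the (internal) direct sum of its weight spaces M_m over
  maximal ideals m, each M_m finite-dimensional over R/m (equivalently, finitely
  generated as an R-module, since R acts on M_m through R/m).\<close>
definition weight_module :: "((int \<Rightarrow> 'r::comm_ring_1) \<Rightarrow> 'm::ab_group_add \<Rightarrow> 'm) \<Rightarrow> bool" where
  "weight_module act \<longleftrightarrow>
     (\<forall>v. \<exists>!f :: 'r set \<Rightarrow> 'm. finite {m. f m \<noteq> 0} \<and>
          (\<forall>m. f m \<noteq> 0 \<longrightarrow> maximal_ideal m \<and> f m \<in> weight_space act m) \<and>
          v = (\<Sum>m\<in>{m. f m \<noteq> 0}. f m)) \<and>
     (\<forall>m. maximal_ideal m \<longrightarrow>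
        (\<exists>S. finite S \<and> S \<subseteq> weight_space act m \<and>
           (\<forall>v\<in>weight_space act m. \<exists>c. v = (\<Sum>s\<in>S. act (monom (c s) 0) s))))"

definition supp_R :: "((int \<Rightarrow> 'r::comm_ring_1) \<Rightarrow> 'm::ab_group_add \<Rightarrow> 'm) \<Rightarrow> 'r set set" where
  "supp_R act = {m. maximal_ideal m \<and> weight_space act m \<noteq> {0}}"

definition sigma_orbit :: "('r \<Rightarrow> 'r) \<Rightarrow> 'r set \<Rightarrow> 'r set set" where
  "sigma_orbit \<sigma> m = {sigma_pow \<sigma> k ` m | k. True}"

definition S_B :: "'r::comm_ring_1 set \<Rightarrow> 'r set \<Rightarrow> 'r set set" where
  "S_B H J = {p. prime_ideal p \<and> ideal_prod H J \<subseteq> p}"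

definition is_break :: "('r::comm_ring_1 \<Rightarrow> 'r) \<Rightarrow> 'r set \<Rightarrow> 'r set \<Rightarrow> 'r set \<Rightarrow> bool" where
  "is_break \<sigma> H J m \<longleftrightarrow> maximal_ideal m \<and> \<sigma> ` m \<in> S_B H J"

definition J_break :: "('r::comm_ring_1 \<Rightarrow> 'r) \<Rightarrow> 'r set \<Rightarrow> 'r set \<Rightarrow>
    ((int \<Rightarrow> 'r) \<Rightarrow> 'm::ab_group_add \<Rightarrow> 'm) \<Rightarrow> 'r set \<Rightarrow> bool" where
  "J_break \<sigma> H J act m \<longleftrightarrow> is_break \<sigma> H J m \<and>
     (\<exists>j\<in>J. \<exists>v\<in>weight_space act m. act (monom j 1) v \<noteq> 0)"

definition H_break :: "('r::comm_ring_1 \<Rightarrow> 'r) \<Rightarrow> 'r set \<Rightarrow> 'r set \<Rightarrow>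
    ((int \<Rightarrow> 'r) \<Rightarrow> 'm::ab_group_add \<Rightarrow> 'm) \<Rightarrow> 'r set \<Rightarrow> bool" where
  "H_break \<sigma> H J act m \<longleftrightarrow> is_break \<sigma> H J m \<and>
     (\<exists>h\<in>H. \<exists>w\<in>weight_space act (\<sigma> ` m). act (monom (inv \<sigma> h) (-1)) w \<noteq> 0)"

end

theory Submission
  imports Defs
begin

lemma ideal_0: "is_ideal I \<Longrightarrow> 0 \<in> I" by (simp add: is_ideal_def)
lemma ideal_add: "is_ideal I \<Longrightarrow> a \<in> I \<Longrightarrow> b \<in> I \<Longrightarrow> a + b \<in> I" by (simp add: is_ideal_def)
lemma ideal_multl: "is_ideal I \<Longrightarrow> a \<in> I \<Longrightarrow> r * a \<in> I" by (simp add: is_ideal_def)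
lemma ideal_multr: "is_ideal I \<Longrightarrow> a \<in> I \<Longrightarrow> a * r \<in> I" by (metis ideal_multl mult.commute)
lemma ideal_neg: "is_ideal I \<Longrightarrow> a \<in> I \<Longrightarrow> - a \<in> I"
  by (metis ideal_multl minus_one_mult_self mult_minus1)
lemma ideal_diff: "is_ideal I \<Longrightarrow> a \<in> I \<Longrightarrow> b \<in> I \<Longrightarrow> a - b \<in> I"
  by (metis ideal_add ideal_neg diff_conv_add_uminus)
lemma ideal_UNIV: "is_ideal UNIV" by (simp add: is_ideal_def)
lemma ideal_prod_ideal: "is_ideal (ideal_prod A B)"
  unfolding ideal_prod_def is_ideal_def by auto
lemma ideal_prod_mem: "a \<in> A \<Longrightarrow> b \<in> B \<Longrightarrow> a * b \<in> ideal_prod A B"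
  unfolding ideal_prod_def by auto
lemma ideal_prod_least: "is_ideal K \<Longrightarrow> (\<And>a b. a \<in> A \<Longrightarrow> b \<in> B \<Longrightarrow> a * b \<in> K) \<Longrightarrow> ideal_prod A B \<subseteq> K"
  unfolding ideal_prod_def by auto
lemma ideal_prod_subl: "is_ideal A \<Longrightarrow> ideal_prod A B \<subseteq> A"
  by (rule ideal_prod_least) (auto intro: ideal_multr)
lemma ideal_prod_subr: "is_ideal B \<Longrightarrow> ideal_prod A B \<subseteq> B"
  by (rule ideal_prod_least) (auto intro: ideal_multl)
lemma ideal_one: "is_ideal I \<Longrightarrow> 1 \<in> I \<Longrightarrow> I = UNIV"
  by (metis UNIV_eq_I ideal_multl mult.right_neutral)

lemma Ipos_ideal: "is_ideal (Ipos \<sigma> J k)" by (cases k) (auto simp: ideal_UNIV ideal_prod_ideal)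
lemma Ineg_ideal: "is_ideal (Ineg \<sigma> H k)" by (cases k) (auto simp: ideal_UNIV ideal_prod_ideal)
lemma Iseq_ideal: "is_ideal (Iseq \<sigma> H J k)" by (simp add: Iseq_def Ipos_ideal Ineg_ideal)

lemma Ipos_mono: "k' \<le> k \<Longrightarrow> Ipos \<sigma> J k \<subseteq> Ipos \<sigma> J k'"
proof (induction k)
  case 0 then show ?case by simp
next
  case (Suc k)
  show ?case
  proof (cases "k' = Suc k")
    case False
    then have "Ipos \<sigma> J k \<subseteq> Ipos \<sigma> J k'" using Suc by auto
    moreover have "Ipos \<sigma> J (Suc k) \<subseteq> Ipos \<sigma> J k" by (simp add: ideal_prod_subl Ipos_ideal)
    ultimately show ?thesis by blast
  qed simp
qed
lemma Ineg_mono: "k' \<le> k \<Longrightarrow> Ineg \<sigma> H k \<subseteq> Ineg \<sigma> H k'"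
proof (induction k)
  case 0 then show ?case by simp
next
  case (Suc k)
  show ?case
  proof (cases "k' = Suc k")
    case False
    then have "Ineg \<sigma> H k \<subseteq> Ineg \<sigma> H k'" using Suc by auto
    moreover have "Ineg \<sigma> H (Suc k) \<subseteq> Ineg \<sigma> H k" by (simp add: ideal_prod_subl Ineg_ideal)
    ultimately show ?thesis by blast
  qed simp
qed

lemma funpow_ring_hom:
  fixes f :: "'r::comm_ring_1 \<Rightarrow> 'r"
  assumes "\<forall>a b. f (a + b) = f a + f b" "\<forall>a b. f (a * b) = f a * f b" "f 1 = 1"
  shows "(f ^^ i) (a + b) = (f ^^ i) a + (f ^^ i) b \<and> (f ^^ i) (a * b) = (f ^^ i) a * (f ^^ i) b \<and> (f ^^ i) 1 = 1"
proof (induction i arbitrary: a b)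
  case 0 show ?case by simp
next
  case (Suc i) then show ?case using assms by simp
qed

locale BRm =
  fixes \<sigma> :: "'r::idom \<Rightarrow> 'r" and H J :: "'r set"
    and act :: "(int \<Rightarrow> 'r) \<Rightarrow> 'm::ab_group_add \<Rightarrow> 'm" and n :: nat
  assumes aut: "ring_aut \<sigma>" and HI: "is_ideal H" and JI: "is_ideal J"
    and per: "\<sigma> ^^ n = id" and npos: "0 < n" and bm: "bmodule \<sigma> H J act"
begin

abbreviation "S \<equiv> sigma_pow \<sigma>"
abbreviation "I \<equiv> Iseq \<sigma> H J"
abbreviation "Mw \<equiv> weight_space act"

lemma fp_mod: "\<sigma> ^^ i = \<sigma> ^^ (i mod n)"
proof -
  have "\<sigma> ^^ (n * q) = id" for q
    by (induction q) (auto simp: funpow_add per)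
  then have "\<sigma> ^^ (i mod n) \<circ> \<sigma> ^^ (n * (i div n)) = \<sigma> ^^ (i mod n)"
    by simp
  then show ?thesis by (metis mod_mult_div_eq funpow_add)
qed

lemma inv_sigma: "inv \<sigma> = \<sigma> ^^ (n - 1)"
proof
  fix x
  have bij: "bij \<sigma>" using aut by (simp add: ring_aut_def)
  have "\<sigma> ((\<sigma> ^^ (n - 1)) x) = x"
  proof -
    have "\<sigma> ((\<sigma> ^^ (n - 1)) x) = (\<sigma> ^^ (Suc (n - 1))) x" by simp
    also have "Suc (n - 1) = n" using npos by simp
    finally show ?thesis using per by simp
  qed
  then show "inv \<sigma> x = (\<sigma> ^^ (n - 1)) x"
    by (metis bij bij_def inv_f_f)
qed

lemma S_norm: "S k = \<sigma> ^^ nat (k mod int n)"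
proof (cases "0 \<le> k")
  case True
  then have "S k = \<sigma> ^^ nat k" by (simp add: sigma_pow_def)
  also have "\<dots> = \<sigma> ^^ (nat k mod n)" by (rule fp_mod)
  also have "nat k mod n = nat (k mod int n)" using True by (simp add: nat_mod_distrib)
  finally show ?thesis .
next
  case False
  define L where "L = nat (- k)"
  have "S k = (\<sigma> ^^ (n - 1)) ^^ L" using False by (simp add: sigma_pow_def inv_sigma L_def)
  also have "\<dots> = \<sigma> ^^ ((n - 1) * L)" by (simp add: funpow_mult mult.commute)
  also have "\<dots> = \<sigma> ^^ (((n - 1) * L) mod n)" by (rule fp_mod)
  also have "((n - 1) * L) mod n = nat (k mod int n)"
  proof -
    have "int (((n - 1) * L) mod n) = (int n * int L - int L) mod int n"
      using npos by (simp add: zmod_int of_nat_diff algebra_simps)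
    also have "\<dots> = (- int L) mod int n"
      by (metis mod_mult_self4 add.commute diff_conv_add_uminus mult.commute)
    also have "- int L = k" using False L_def by simp
    finally show ?thesis by simp
  qed
  finally show ?thesis .
qed

lemma S_hom: "S k (a + b) = S k a + S k b" "S k (a * b) = S k a * S k b" "S k 1 = 1"
  using funpow_ring_hom[of \<sigma> "nat (k mod int n)" a b] aut
  by (simp_all add: S_norm ring_aut_def)

lemma S_0[simp]: "S k 0 = 0"
  by (metis S_hom(1) add_cancel_right_right)
lemma S_neg: "S k (- a) = - S k a"
  by (metis S_hom(1) S_0 add_eq_0_iff)
lemma S_diff: "S k (a - b) = S k a - S k b"
  by (metis S_hom(1) S_neg diff_conv_add_uminus)

lemma S_add: "S a (S b x) = S (a + b) x"
proof -
  have "S a (S b x) = (\<sigma> ^^ (nat (a mod int n) + nat (b mod int n))) x"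
    by (simp add: S_norm funpow_add)
  also have "\<dots> = (\<sigma> ^^ ((nat (a mod int n) + nat (b mod int n)) mod n)) x"
    by (subst fp_mod) simp
  also have "(nat (a mod int n) + nat (b mod int n)) mod n = nat ((a + b) mod int n)"
  proof -
    have "int ((nat (a mod int n) + nat (b mod int n)) mod n) = (a mod int n + b mod int n) mod int n"
      using npos by (simp add: zmod_int)
    also have "\<dots> = (a + b) mod int n" by (simp add: mod_add_eq)
    finally show ?thesis by simp
  qed
  finally show ?thesis by (simp add: S_norm)
qed

lemma S_zero_id[simp]: "S 0 x = x" by (simp add: sigma_pow_def)
lemma S_inv: "S k (S (- k) x) = x" by (simp add: S_add)
lemma S_inv2: "S (- k) (S k x) = x" by (simp add: S_add)
lemma S_mod: "S (k mod int n) = S k" by (simp add: S_norm)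
lemma S_one: "S 1 = \<sigma>" by (simp add: sigma_pow_def)
lemma S_m1: "S (-1) = inv \<sigma>" by (simp add: sigma_pow_def)
lemma S_nat: "S (int k) = \<sigma> ^^ k" by (simp add: sigma_pow_def)

end

context BRm begin

lemma I0[simp]: "I 0 = UNIV" by (simp add: Iseq_def)
lemma I_ideal: "is_ideal (I k)" by (rule Iseq_ideal)
lemma J_I1: "j \<in> J \<Longrightarrow> j \<in> I 1"
  using ideal_prod_mem[of 1 UNIV j J] by (simp add: Iseq_def)
lemma H_Im1: "h \<in> H \<Longrightarrow> S (-1) h \<in> I (-1)"
  using ideal_prod_mem[of 1 UNIV "S (-1) h" "S (-1) ` H"] by (simp add: Iseq_def)

lemma monom_BR: "c \<in> I k \<Longrightarrow> monom c k \<in> BR \<sigma> H J"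
proof -
  assume c: "c \<in> I k"
  have "finite {x. monom c k x \<noteq> 0}"
    by (rule finite_subset[of _ "{k}"]) (auto simp: monom_def)
  moreover have "monom c k x \<in> I x" for x
    using c by (auto simp: monom_def ideal_0[OF I_ideal])
  ultimately show ?thesis by (simp add: BR_def)
qed

lemma act_addv: "f \<in> BR \<sigma> H J \<Longrightarrow> act f (v + w) = act f v + act f w"
  using bm by (simp add: bmodule_def)
lemma act_addf: "f \<in> BR \<sigma> H J \<Longrightarrow> g \<in> BR \<sigma> H J \<Longrightarrow> act (\<lambda>k. f k + g k) v = act f v + act g v"
  using bm by (simp add: bmodule_def)
lemma act_mult: "f \<in> BR \<sigma> H J \<Longrightarrow> g \<in> BR \<sigma> H J \<Longrightarrow> act (sl_mult \<sigma> f g) v = act f (act g v)"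
  using bm by (simp add: bmodule_def)
lemma act_one: "act (monom 1 0) v = v"
  using bm by (simp add: bmodule_def)

lemma act_0v: "f \<in> BR \<sigma> H J \<Longrightarrow> act f 0 = 0"
  using act_addv[of f 0 0] by simp
lemma act_negv: "f \<in> BR \<sigma> H J \<Longrightarrow> act f (- v) = - act f v"
  using act_addv[of f v "- v"] act_0v[of f] by (simp add: add_eq_0_iff)
lemma act_sumv: "f \<in> BR \<sigma> H J \<Longrightarrow> act f (sum g A) = (\<Sum>a\<in>A. act f (g a))"
  by (induction A rule: infinite_finite_induct) (auto simp: act_0v act_addv)

lemma monom_add: "monom ((a::'r) + b) k = (\<lambda>x. monom a k x + monom b k x)"
  by (auto simp: monom_def fun_eq_iff)

lemma act_monom_add: "a \<in> I k \<Longrightarrow> b \<in> I k \<Longrightarrow> act (monom (a + b) k) x = act (monom a k) x + act (monom b k) x"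
  by (simp add: monom_add act_addf monom_BR)

lemma act_monom_0[simp]: "act (monom 0 k) x = 0"
proof -
  have z: "0 \<in> I k" by (rule ideal_0[OF I_ideal])
  have "act (monom (0 + 0) k) x = act (monom 0 k) x + act (monom 0 k) x"
    by (rule act_monom_add[OF z z])
  then show ?thesis by simp
qed

lemma act_monom_neg: "a \<in> I k \<Longrightarrow> act (monom (- a) k) x = - act (monom a k) x"
  using act_monom_add[of a k "- a" x] ideal_neg[OF I_ideal]
  by (simp add: add_eq_0_iff)

lemma act_monom_diff: "a \<in> I k \<Longrightarrow> b \<in> I k \<Longrightarrow> act (monom (a - b) k) x = act (monom a k) x - act (monom b k) x"
  using act_monom_add[of a k "- b" x] act_monom_neg[of b k x] ideal_neg[OF I_ideal]
  by simp

lemma sl_monom: "sl_mult \<sigma> (monom a k) (monom b l) = monom (a * S k b) (k + l)"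
proof (cases "a = 0")
  case True
  then show ?thesis by (simp add: sl_mult_def monom_def fun_eq_iff)
next
  case False
  then have "{x. monom a k x \<noteq> 0} = {k}" by (auto simp: monom_def)
  then show ?thesis by (auto simp: sl_mult_def monom_def fun_eq_iff)
qed

lemma comp: "a \<in> I k \<Longrightarrow> b \<in> I l \<Longrightarrow>
   act (monom a k) (act (monom b l) x) = act (monom (a * S k b) (k + l)) x"
  by (metis act_mult monom_BR sl_monom)

lemma weight: "x \<in> Mw p \<Longrightarrow> c \<in> I k \<Longrightarrow> act (monom c k) x \<in> Mw (S k ` p)"
proof -
  assume x: "x \<in> Mw p" and c: "c \<in> I k"
  show ?thesis unfolding weight_space_def
  proof (intro CollectI ballI)
    fix r assume "r \<in> S k ` p"
    then obtain s where s: "s \<in> p" "r = S k s" by auto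
    have "act (monom r 0) (act (monom c k) x) = act (monom (r * c) k) x"
      using comp[of r 0 c k x] c by simp
    also have "r * c = c * S k s" using s by (simp add: mult.commute)
    also have "act (monom (c * S k s) k) x = act (monom c k) (act (monom s 0) x)"
      using comp[of c k s 0 x] c by simp
    also have "act (monom s 0) x = 0" using x s by (simp add: weight_space_def)
    finally show "act (monom r 0) (act (monom c k) x) = 0"
      using act_0v monom_BR c by simp
  qed
qed

lemma kill: "x \<in> Mw p \<Longrightarrow> r \<in> p \<Longrightarrow> act (monom r 0) x = 0"
  by (simp add: weight_space_def)

lemma fix1: "x \<in> Mw p \<Longrightarrow> r - 1 \<in> p \<Longrightarrow> act (monom r 0) x = x"
proof -
  assume x: "x \<in> Mw p" and r: "r - 1 \<in> p"
  have "act (monom r 0) x = act (monom ((r - 1) + 1) 0) x" by simp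
  also have "\<dots> = act (monom (r - 1) 0) x + act (monom 1 0) x"
    by (rule act_monom_add) auto
  also have "\<dots> = x" using kill[OF x r] act_one by simp
  finally show ?thesis .
qed

lemma Mw_0: "0 \<in> Mw p" by (simp add: weight_space_def act_0v monom_BR)

end

context BRm begin

lemma Ipos_Suc: "Ipos \<sigma> J (Suc k) = ideal_prod (Ipos \<sigma> J k) (S (int k) ` J)"
  by (simp add: S_nat)
lemma Ineg_Suc: "Ineg \<sigma> H (Suc k) = ideal_prod (Ineg \<sigma> H k) (S (- (int k + 1)) ` H)"
  by simp

declare Ipos.simps(2)[simp del] Ineg.simps(2)[simp del]

lemma pre_ideal: "is_ideal K \<Longrightarrow> is_ideal {d. c * S a d \<in> K}"
  unfolding is_ideal_def
  by (auto simp: S_hom distrib_left) (metis mult.left_commute)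

lemma L1: "c \<in> Ipos \<sigma> J A \<Longrightarrow> d \<in> Ipos \<sigma> J B \<Longrightarrow> c * S (int A) d \<in> Ipos \<sigma> J (A + B)"
proof (induction B arbitrary: d)
  case 0 then show ?case by (simp add: ideal_multr Ipos_ideal)
next
  case (Suc B)
  have "ideal_prod (Ipos \<sigma> J B) (S (int B) ` J) \<subseteq> {d. c * S (int A) d \<in> Ipos \<sigma> J (A + Suc B)}"
  proof (rule ideal_prod_least[OF pre_ideal[OF Ipos_ideal]])
    fix d1 d2 assume d1: "d1 \<in> Ipos \<sigma> J B" and d2: "d2 \<in> S (int B) ` J"
    then obtain j where j: "j \<in> J" "d2 = S (int B) j" by auto
    have "c * S (int A) (d1 * d2) = (c * S (int A) d1) * S (int (A + B)) j"
      using j by (simp add: S_hom S_add mult.assoc)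
    also have "\<dots> \<in> Ipos \<sigma> J (A + Suc B)"
      using Suc.IH[OF Suc.prems(1) d1] j by (simp add: Ipos_Suc ideal_prod_mem)
    finally show "d1 * d2 \<in> {d. c * S (int A) d \<in> Ipos \<sigma> J (A + Suc B)}" by simp
  qed
  then show ?case using Suc.prems(2) by (auto simp: Ipos_Suc)
qed

lemma L2: "c \<in> Ineg \<sigma> H A \<Longrightarrow> d \<in> Ineg \<sigma> H B \<Longrightarrow> c * S (- int A) d \<in> Ineg \<sigma> H (A + B)"
proof (induction B arbitrary: d)
  case 0 then show ?case by (simp add: ideal_multr Ineg_ideal)
next
  case (Suc B)
  have "ideal_prod (Ineg \<sigma> H B) (S (- (int B + 1)) ` H) \<subseteq> {d. c * S (- int A) d \<in> Ineg \<sigma> H (A + Suc B)}"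
  proof (rule ideal_prod_least[OF pre_ideal[OF Ineg_ideal]])
    fix d1 d2 assume d1: "d1 \<in> Ineg \<sigma> H B" and d2: "d2 \<in> S (- (int B + 1)) ` H"
    then obtain h where h: "h \<in> H" "d2 = S (- (int B + 1)) h" by auto
    have "c * S (- int A) (d1 * d2) = (c * S (- int A) d1) * S (- (int (A + B) + 1)) h"
      using h by (simp add: S_hom S_add mult.assoc algebra_simps)
    also have "\<dots> \<in> Ineg \<sigma> H (A + Suc B)"
      using Suc.IH[OF Suc.prems(1) d1] h by (simp add: Ineg_Suc ideal_prod_mem)
    finally show "d1 * d2 \<in> {d. c * S (- int A) d \<in> Ineg \<sigma> H (A + Suc B)}" by simp
  qed
  then show ?case using Suc.prems(2) by (auto simp: Ineg_Suc)
qed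

lemma L4: "d \<in> Ipos \<sigma> J (A + l) \<Longrightarrow> S (- int A) d \<in> Ipos \<sigma> J l"
proof (induction l arbitrary: d)
  case 0 then show ?case by simp
next
  case (Suc l)
  have "ideal_prod (Ipos \<sigma> J (A + l)) (S (int (A + l)) ` J) \<subseteq> {d. 1 * S (- int A) d \<in> Ipos \<sigma> J (Suc l)}"
  proof (rule ideal_prod_least[OF pre_ideal[OF Ipos_ideal]])
    fix d1 d2 assume d1: "d1 \<in> Ipos \<sigma> J (A + l)" and d2: "d2 \<in> S (int (A + l)) ` J"
    then obtain j where j: "j \<in> J" "d2 = S (int (A + l)) j" by auto
    have "S (- int A) (d1 * d2) = S (- int A) d1 * S (int l) j"
      using j by (simp add: S_hom S_add)
    also have "\<dots> \<in> Ipos \<sigma> J (Suc l)"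
      using Suc.IH[OF d1] j by (simp add: Ipos_Suc ideal_prod_mem)
    finally show "d1 * d2 \<in> {d. 1 * S (- int A) d \<in> Ipos \<sigma> J (Suc l)}" by simp
  qed
  then show ?case using Suc.prems by (auto simp: Ipos_Suc)
qed

lemma L5: "d \<in> Ineg \<sigma> H (A + l) \<Longrightarrow> S (int A) d \<in> Ineg \<sigma> H l"
proof (induction l arbitrary: d)
  case 0 then show ?case by simp
next
  case (Suc l)
  have "ideal_prod (Ineg \<sigma> H (A + l)) (S (- (int (A + l) + 1)) ` H) \<subseteq> {d. 1 * S (int A) d \<in> Ineg \<sigma> H (Suc l)}"
  proof (rule ideal_prod_least[OF pre_ideal[OF Ineg_ideal]])
    fix d1 d2 assume d1: "d1 \<in> Ineg \<sigma> H (A + l)" and d2: "d2 \<in> S (- (int (A + l) + 1)) ` H"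
    then obtain h where h: "h \<in> H" "d2 = S (- (int (A + l) + 1)) h" by auto
    have "S (int A) (d1 * d2) = S (int A) d1 * S (- (int l + 1)) h"
      using h by (simp add: S_hom S_add)
    also have "\<dots> \<in> Ineg \<sigma> H (Suc l)"
      using Suc.IH[OF d1] h by (simp add: Ineg_Suc ideal_prod_mem)
    finally show "d1 * d2 \<in> {d. 1 * S (int A) d \<in> Ineg \<sigma> H (Suc l)}" by simp
  qed
  then show ?case using Suc.prems by (auto simp: Ineg_Suc)
qed

lemma closure: "c \<in> I a \<Longrightarrow> d \<in> I b \<Longrightarrow> c * S a d \<in> I (a + b)"
proof -
  assume c: "c \<in> I a" and d: "d \<in> I b"
  consider "0 \<le> a" "0 \<le> b" | "a < 0" "b < 0" | "0 \<le> a" "b < 0" | "a < 0" "0 \<le> b" by linarith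
  then show ?thesis
  proof cases
    case 1
    then show ?thesis using L1[of c "nat a" d "nat b"] c d
      by (simp add: Iseq_def nat_add_distrib)
  next
    case 2
    have e: "nat (- a) + nat (- b) = nat (- a - b)" using 2 by simp
    show ?thesis using L2[of c "nat (- a)" d "nat (- b)"] c d 2
      by (simp add: Iseq_def e)
  next
    case 3
    show ?thesis
    proof (cases "0 \<le> a + b")
      case True
      have "c * S a d \<in> Ipos \<sigma> J (nat a)" using c 3 by (simp add: Iseq_def ideal_multr Ipos_ideal)
      moreover have "Ipos \<sigma> J (nat a) \<subseteq> Ipos \<sigma> J (nat (a + b))" using 3 by (intro Ipos_mono) simp
      ultimately show ?thesis using True by (auto simp: Iseq_def)
    next
      case False
      have "d \<in> Ineg \<sigma> H (nat a + nat (- (a + b)))" using d 3 False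
        by (simp add: Iseq_def) (smt (verit) nat_add_distrib)
      from L5[OF this] have "S a d \<in> Ineg \<sigma> H (nat (- (a + b)))" using 3 by simp
      then show ?thesis using False by (simp add: Iseq_def ideal_multl Ineg_ideal)
    qed
  next
    case 4
    show ?thesis
    proof (cases "a + b \<le> 0")
      case True
      show ?thesis
      proof (cases "a + b = 0")
        case True then show ?thesis by simp
      next
        case False
        have "c * S a d \<in> Ineg \<sigma> H (nat (- a))" using c 4 by (simp add: Iseq_def ideal_multr Ineg_ideal)
        moreover have "Ineg \<sigma> H (nat (- a)) \<subseteq> Ineg \<sigma> H (nat (- (a + b)))" using 4 by (intro Ineg_mono) simp
        ultimately show ?thesis using True False by (auto simp: Iseq_def)
      qed
    next
      case False
      have "d \<in> Ipos \<sigma> J (nat (- a) + nat (a + b))" using d 4 False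
        by (simp add: Iseq_def) (smt (verit) nat_add_distrib)
      from L4[OF this] have "S a d \<in> Ipos \<sigma> J (nat (a + b))" using 4 by simp
      then show ?thesis using False by (simp add: Iseq_def ideal_multl Ipos_ideal)
    qed
  qed
qed

end

context BRm begin

lemma act_decomp_aux:
  assumes f: "f \<in> BR \<sigma> H J" and F: "finite F"
  shows "(\<lambda>x. if x \<in> F then f x else 0) \<in> BR \<sigma> H J \<and>
         act (\<lambda>x. if x \<in> F then f x else 0) v = (\<Sum>k\<in>F. act (monom (f k) k) v)"
  using F
proof (induction F rule: finite_induct)
  case empty
  have "(\<lambda>x. if x \<in> {} then f x else 0) = monom 0 0" by (simp add: monom_def fun_eq_iff)
  then show ?case by (simp add: monom_BR)
next
  case (insert k F)
  have fk: "f k \<in> I k" using f by (simp add: BR_def)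
  have eq: "(\<lambda>x. if x \<in> insert k F then f x else 0) = (\<lambda>x. monom (f k) k x + (if x \<in> F then f x else 0))"
    using insert.hyps by (auto simp: monom_def fun_eq_iff)
  have br: "(\<lambda>x. if x \<in> insert k F then f x else 0) \<in> BR \<sigma> H J"
  proof -
    have "{x. (if x \<in> insert k F then f x else 0) \<noteq> 0} \<subseteq> insert k F" by auto
    then have "finite {x. (if x \<in> insert k F then f x else 0) \<noteq> 0}"
      using insert.hyps finite_subset by blast
    moreover have "(if x \<in> insert k F then f x else 0) \<in> I x" for x
      using f by (auto simp: BR_def ideal_0[OF I_ideal])
    ultimately show ?thesis by (simp add: BR_def)
  qed
  show ?case
  proof
    show "(\<lambda>x. if x \<in> insert k F then f x else 0) \<in> BR \<sigma> H J" by (rule br)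
    have "act (\<lambda>x. if x \<in> insert k F then f x else 0) v
        = act (\<lambda>x. monom (f k) k x + (if x \<in> F then f x else 0)) v"
      by (subst eq) (rule refl)
    also have "\<dots> = act (monom (f k) k) v + act (\<lambda>x. if x \<in> F then f x else 0) v"
      by (rule act_addf[OF monom_BR[OF fk]]) (use insert in simp)
    also have "\<dots> = (\<Sum>k\<in>insert k F. act (monom (f k) k) v)"
      using insert by simp
    finally show "act (\<lambda>x. if x \<in> insert k F then f x else 0) v = (\<Sum>k\<in>insert k F. act (monom (f k) k) v)" .
  qed
qed

lemma act_decomp: "f \<in> BR \<sigma> H J \<Longrightarrow> act f v = (\<Sum>k\<in>{k. f k \<noteq> 0}. act (monom (f k) k) v)"
proof -
  assume f: "f \<in> BR \<sigma> H J"
  then have fin: "finite {k. f k \<noteq> 0}" by (simp add: BR_def)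
  have "(\<lambda>x. if x \<in> {k. f k \<noteq> 0} then f x else 0) = f" by (auto simp: fun_eq_iff)
  then show ?thesis using act_decomp_aux[OF f fin, of v] by simp
qed

inductive_set hg :: "'m \<Rightarrow> 'm set" for w where
  gen: "c \<in> I k \<Longrightarrow> act (monom c k) w \<in> hg w"
| add: "x \<in> hg w \<Longrightarrow> y \<in> hg w \<Longrightarrow> x + y \<in> hg w"

lemma hg_0: "0 \<in> hg w"
  using hg.gen[of 0 0 w] by simp
lemma hg_w: "w \<in> hg w"
  using hg.gen[of 1 0 w] by (simp add: act_one)
lemma hg_sum: "(\<And>a. a \<in> A \<Longrightarrow> g a \<in> hg w) \<Longrightarrow> sum g A \<in> hg w"
  by (induction A rule: infinite_finite_induct) (auto simp: hg_0 intro: hg.add)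
lemma hg_neg: "x \<in> hg w \<Longrightarrow> - x \<in> hg w"
proof (induction rule: hg.induct)
  case (gen c k)
  then show ?case using hg.gen[of "- c" k w] act_monom_neg[of c k w] ideal_neg[OF I_ideal] by simp
next
  case (add x y)
  then show ?case using hg.add[of "- x" w "- y"] by (simp add: add.commute)
qed

lemma hg_act: "x \<in> hg w \<Longrightarrow> f \<in> BR \<sigma> H J \<Longrightarrow> act f x \<in> hg w"
proof (induction rule: hg.induct)
  case (gen c k)
  have "act f (act (monom c k) w) = (\<Sum>j\<in>{j. f j \<noteq> 0}. act (monom (f j) j) (act (monom c k) w))"
    by (rule act_decomp[OF gen.prems])
  also have "\<dots> \<in> hg w"
  proof (rule hg_sum)
    fix j
    have fj: "f j \<in> I j" using gen.prems by (simp add: BR_def)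
    show "act (monom (f j) j) (act (monom c k) w) \<in> hg w"
      using comp[OF fj gen.hyps] closure[OF fj gen.hyps] hg.gen by simp
  qed
  finally show ?case .
next
  case (add x y)
  then show ?case by (simp add: act_addv hg.add)
qed

lemma hg_sub: "bsubmodule \<sigma> H J act (hg w)"
  unfolding bsubmodule_def by (auto simp: hg_0 hg_neg hg_act intro: hg.add)

lemma hg_UNIV: "simple_bmodule \<sigma> H J act \<Longrightarrow> w \<noteq> 0 \<Longrightarrow> hg w = UNIV"
  unfolding simple_bmodule_def using hg_sub[of w] hg_w[of w] by auto

end

context BRm begin

lemma I_pos: "I (int K) = Ipos \<sigma> J K" by (simp add: Iseq_def)
lemma I_neg: "I (- int L) = Ineg \<sigma> H L" by (cases "L = 0") (auto simp: Iseq_def)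
lemma I_pos': "I (1 + int K) = Ipos \<sigma> J (Suc K)" using I_pos[of "Suc K"] by simp
lemma I_neg': "I (- 1 - int L) = Ineg \<sigma> H (Suc L)" using I_neg[of "Suc L"] by (simp add: algebra_simps)
lemma I_neg'': "I (- int L - 1) = Ineg \<sigma> H (Suc L)" using I_neg' by (metis diff_diff_eq2 diff_minus_eq_add uminus_add_conv_diff add.commute)

lemma img_S: "S a ` S b ` p = S (a + b) ` p"
  by (auto simp: image_image S_add)
lemma img_S0[simp]: "S 0 ` p = p" by simp

lemma kill_ideal: "is_ideal {e \<in> I k. act (monom e k) y = 0}"
  unfolding is_ideal_def
proof (intro conjI ballI allI impI)
  show "0 \<in> {e \<in> I k. act (monom e k) y = 0}" by (simp add: ideal_0[OF I_ideal])
next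
  fix a b assume "a \<in> {e \<in> I k. act (monom e k) y = 0}" "b \<in> {e \<in> I k. act (monom e k) y = 0}"
  then show "a + b \<in> {e \<in> I k. act (monom e k) y = 0}"
    by (simp add: act_monom_add ideal_add[OF I_ideal])
next
  fix r a assume a: "a \<in> {e \<in> I k. act (monom e k) y = 0}"
  then have "act (monom (r * a) k) y = act (monom r 0) (act (monom a k) y)"
    using comp[of r 0 a k y] by simp
  then show "r * a \<in> {e \<in> I k. act (monom e k) y = 0}"
    using a by (simp add: act_0v monom_BR ideal_multl[OF I_ideal])
qed

lemma KS_ideal: "is_ideal {e \<in> I k. \<forall>h\<in>H. \<forall>y\<in>Y. act (monom (S (-1) h) (-1)) (act (monom e k) y) = 0}"
  unfolding is_ideal_def
proof (intro conjI ballI allI impI)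
  show "0 \<in> {e \<in> I k. \<forall>h\<in>H. \<forall>y\<in>Y. act (monom (S (-1) h) (-1)) (act (monom e k) y) = 0}"
    by (simp add: ideal_0[OF I_ideal] act_0v monom_BR H_Im1)
next
  fix a b assume "a \<in> {e \<in> I k. \<forall>h\<in>H. \<forall>y\<in>Y. act (monom (S (-1) h) (-1)) (act (monom e k) y) = 0}"
    "b \<in> {e \<in> I k. \<forall>h\<in>H. \<forall>y\<in>Y. act (monom (S (-1) h) (-1)) (act (monom e k) y) = 0}"
  then show "a + b \<in> {e \<in> I k. \<forall>h\<in>H. \<forall>y\<in>Y. act (monom (S (-1) h) (-1)) (act (monom e k) y) = 0}"
    by (simp add: act_monom_add ideal_add[OF I_ideal] act_addv monom_BR H_Im1)
next
  fix r a assume a: "a \<in> {e \<in> I k. \<forall>h\<in>H. \<forall>y\<in>Y. act (monom (S (-1) h) (-1)) (act (monom e k) y) = 0}"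
  show "r * a \<in> {e \<in> I k. \<forall>h\<in>H. \<forall>y\<in>Y. act (monom (S (-1) h) (-1)) (act (monom e k) y) = 0}"
  proof (simp add: ideal_multl[OF I_ideal] a[simplified], intro ballI)
    fix h y assume h: "h \<in> H" and y: "y \<in> Y"
    have hr: "h * r \<in> H" using h HI by (simp add: ideal_multr)
    have "act (monom (S (-1) h) (-1)) (act (monom (r * a) k) y)
        = act (monom (S (-1) h) (-1)) (act (monom r 0) (act (monom a k) y))"
      using comp[of r 0 a k y] a by simp
    also have "\<dots> = act (monom (S (-1) h * S (-1) r) (-1)) (act (monom a k) y)"
      using comp[of "S (-1) h" "-1" r 0] H_Im1[OF h] by simp
    also have "S (-1) h * S (-1) r = S (-1) (h * r)" by (simp add: S_hom)
    also have "act (monom (S (-1) (h * r)) (-1)) (act (monom a k) y) = 0"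
      using a hr y by simp
    finally show "act (monom (S (-1) h) (-1)) (act (monom (r * a) k) y) = 0" .
  qed
qed

lemma pos1: "(\<forall>j\<in>J. act (monom j 1) y = 0) \<Longrightarrow> e \<in> Ipos \<sigma> J (Suc K) \<Longrightarrow> act (monom e (int (Suc K))) y = 0"
proof -
  assume hyp: "\<forall>j\<in>J. act (monom j 1) y = 0" and e: "e \<in> Ipos \<sigma> J (Suc K)"
  have "ideal_prod (Ipos \<sigma> J K) (S (int K) ` J) \<subseteq> {e \<in> I (int (Suc K)). act (monom e (int (Suc K))) y = 0}"
  proof (rule ideal_prod_least[OF kill_ideal])
    fix a d assume a: "a \<in> Ipos \<sigma> J K" and "d \<in> S (int K) ` J"
    then obtain j where j: "j \<in> J" "d = S (int K) j" by auto
    have "act (monom (a * d) (int (Suc K))) y = act (monom a (int K)) (act (monom j 1) y)"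
      using comp[of a "int K" j 1 y] a J_I1[OF j(1)] j by (simp add: I_pos add.commute)
    also have "\<dots> = 0" using hyp j a by (simp add: act_0v monom_BR I_pos)
    finally show "a * d \<in> {e \<in> I (int (Suc K)). act (monom e (int (Suc K))) y = 0}"
      using a j by (simp add: I_pos' Ipos_Suc ideal_prod_mem)
  qed
  then show ?thesis using e by (auto simp: Ipos_Suc)
qed

lemma neg1: "(\<forall>h\<in>H. act (monom (S (-1) h) (-1)) y = 0) \<Longrightarrow> e \<in> Ineg \<sigma> H (Suc L) \<Longrightarrow> act (monom e (- int (Suc L))) y = 0"
proof -
  assume hyp: "\<forall>h\<in>H. act (monom (S (-1) h) (-1)) y = 0" and e: "e \<in> Ineg \<sigma> H (Suc L)"
  have "ideal_prod (Ineg \<sigma> H L) (S (- (int L + 1)) ` H) \<subseteq> {e \<in> I (- int (Suc L)). act (monom e (- int (Suc L))) y = 0}"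
  proof (rule ideal_prod_least[OF kill_ideal])
    fix a d assume a: "a \<in> Ineg \<sigma> H L" and "d \<in> S (- (int L + 1)) ` H"
    then obtain h where h: "h \<in> H" "d = S (- (int L + 1)) h" by auto
    have "act (monom (a * d) (- int (Suc L))) y = act (monom a (- int L)) (act (monom (S (-1) h) (-1)) y)"
      using comp[of a "- int L" "S (-1) h" "-1" y] a H_Im1[OF h(1)] h by (simp add: I_neg S_add algebra_simps)
    also have "\<dots> = 0" using hyp h a by (simp add: act_0v monom_BR I_neg)
    finally show "a * d \<in> {e \<in> I (- int (Suc L)). act (monom e (- int (Suc L))) y = 0}"
      using a h by (simp add: I_neg' Ineg_Suc ideal_prod_mem)
  qed
  then show ?thesis using e by (auto simp: Ineg_Suc)
qed

end

context BRm begin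

lemma posK: "e \<in> Ipos \<sigma> J K \<Longrightarrow> y \<in> Mw p \<Longrightarrow> l < K \<Longrightarrow>
  (\<forall>j\<in>J. \<forall>v\<in>Mw (S (int l) ` p). act (monom j 1) v = 0) \<Longrightarrow> act (monom e (int K)) y = 0"
proof (induction K arbitrary: e p y l)
  case 0 then show ?case by simp
next
  case (Suc K)
  have "ideal_prod (Ipos \<sigma> J K) (S (int K) ` J) \<subseteq> {e \<in> I (int (Suc K)). act (monom e (int (Suc K))) y = 0}"
  proof (rule ideal_prod_least[OF kill_ideal])
    fix a d assume a: "a \<in> Ipos \<sigma> J K" and "d \<in> S (int K) ` J"
    then obtain j where j: "j \<in> J" "d = S (int K) j" by auto
    have "act (monom (a * d) (int (Suc K))) y = act (monom a (int K)) (act (monom j 1) y)"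
      using comp[of a "int K" j 1 y] a J_I1[OF j(1)] j by (simp add: I_pos add.commute)
    also have "\<dots> = 0"
    proof (cases l)
      case 0
      then have "act (monom j 1) y = 0" using Suc.prems j by simp
      then show ?thesis using a by (simp add: act_0v monom_BR I_pos)
    next
      case (Suc l')
      have y': "act (monom j 1) y \<in> Mw (S 1 ` p)" using weight[OF Suc.prems(2) J_I1[OF j(1)]] .
      have "\<forall>j\<in>J. \<forall>v\<in>Mw (S (int l') ` S 1 ` p). act (monom j 1) v = 0"
        using Suc.prems(4) Suc by (simp add: img_S add.commute)
      then show ?thesis using Suc.IH[OF a y'] Suc Suc.prems(3) by simp
    qed
    finally show "a * d \<in> {e \<in> I (int (Suc K)). act (monom e (int (Suc K))) y = 0}"
      using a j by (simp add: I_pos' Ipos_Suc ideal_prod_mem)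
  qed
  then show ?case using Suc.prems(1) by (auto simp: Ipos_Suc)
qed

lemma negK: "e \<in> Ineg \<sigma> H L \<Longrightarrow> y \<in> Mw p \<Longrightarrow> l < L \<Longrightarrow>
  (\<forall>h\<in>H. \<forall>v\<in>Mw (S (- int l) ` p). act (monom (S (-1) h) (-1)) v = 0) \<Longrightarrow> act (monom e (- int L)) y = 0"
proof (induction L arbitrary: e p y l)
  case 0 then show ?case by simp
next
  case (Suc L)
  have "ideal_prod (Ineg \<sigma> H L) (S (- (int L + 1)) ` H) \<subseteq> {e \<in> I (- int (Suc L)). act (monom e (- int (Suc L))) y = 0}"
  proof (rule ideal_prod_least[OF kill_ideal])
    fix a d assume a: "a \<in> Ineg \<sigma> H L" and "d \<in> S (- (int L + 1)) ` H"
    then obtain h where h: "h \<in> H" "d = S (- (int L + 1)) h" by auto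
    have "act (monom (a * d) (- int (Suc L))) y = act (monom a (- int L)) (act (monom (S (-1) h) (-1)) y)"
      using comp[of a "- int L" "S (-1) h" "-1" y] a H_Im1[OF h(1)] h by (simp add: I_neg S_add algebra_simps)
    also have "\<dots> = 0"
    proof (cases l)
      case 0
      then have "act (monom (S (-1) h) (-1)) y = 0" using Suc.prems h by simp
      then show ?thesis using a by (simp add: act_0v monom_BR I_neg)
    next
      case (Suc l')
      have y': "act (monom (S (-1) h) (-1)) y \<in> Mw (S (-1) ` p)" using weight[OF Suc.prems(2) H_Im1[OF h(1)]] .
      have "\<forall>h\<in>H. \<forall>v\<in>Mw (S (- int l') ` S (-1) ` p). act (monom (S (-1) h) (-1)) v = 0"
        using Suc.prems(4) Suc by (simp add: img_S algebra_simps)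
      then show ?thesis using Suc.IH[OF a y'] Suc Suc.prems(3) by simp
    qed
    finally show "a * d \<in> {e \<in> I (- int (Suc L)). act (monom e (- int (Suc L))) y = 0}"
      using a h by (simp add: I_neg' Ineg_Suc ideal_prod_mem)
  qed
  then show ?case using Suc.prems(1) by (auto simp: Ineg_Suc)
qed

lemma P1:
  assumes mI: "is_ideal m" and br: "\<forall>h\<in>H. \<forall>j\<in>J. S (-1) (h * j) \<in> m"
  shows "e \<in> Ipos \<sigma> J (Suc K) \<Longrightarrow> h \<in> H \<Longrightarrow> y \<in> Mw (S (- int K) ` m) \<Longrightarrow>
    act (monom (S (-1) h) (-1)) (act (monom e (int (Suc K))) y) = 0"
proof (induction K arbitrary: e h y)
  case 0
  have "ideal_prod (Ipos \<sigma> J 0) (S 0 ` J) \<subseteq>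
      {e \<in> I 1. \<forall>h\<in>H. \<forall>y\<in>Mw m. act (monom (S (-1) h) (-1)) (act (monom e 1) y) = 0}"
  proof (rule ideal_prod_least[OF KS_ideal])
    fix a d assume "a \<in> Ipos \<sigma> J 0" and d: "d \<in> S 0 ` J"
    then have j: "d \<in> J" by simp
    have ad: "a * d \<in> I 1" using J_I1[OF j] ideal_multl[OF I_ideal] by blast
    show "a * d \<in> {e \<in> I 1. \<forall>h\<in>H. \<forall>y\<in>Mw m. act (monom (S (-1) h) (-1)) (act (monom e 1) y) = 0}"
    proof (simp add: ad, intro ballI)
      fix h y assume h: "h \<in> H" and y: "y \<in> Mw m"
      have "act (monom (S (-1) h) (-1)) (act (monom (a * d) 1) y) = act (monom (S (-1) h * S (-1) (a * d)) 0) y"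
        using comp[OF H_Im1[OF h] ad] by simp
      also have "S (-1) h * S (-1) (a * d) = S (-1) a * S (-1) (h * d)" by (simp add: S_hom algebra_simps)
      also have "\<dots> \<in> m" using br h j mI by (simp add: ideal_multl)
      then have "act (monom (S (-1) a * S (-1) (h * d)) 0) y = 0" using kill[OF y] by simp
      finally show "act (monom (S (-1) h) (-1)) (act (monom (a * d) 1) y) = 0" .
    qed
  qed
  then show ?case using 0 by (auto simp: Ipos_Suc)
next
  case (Suc K)
  have "ideal_prod (Ipos \<sigma> J (Suc K)) (S (int (Suc K)) ` J) \<subseteq>
      {e \<in> I (int (Suc (Suc K))). \<forall>h\<in>H. \<forall>y\<in>Mw (S (- int (Suc K)) ` m).
         act (monom (S (-1) h) (-1)) (act (monom e (int (Suc (Suc K)))) y) = 0}"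
  proof (rule ideal_prod_least[OF KS_ideal])
    fix a d assume a: "a \<in> Ipos \<sigma> J (Suc K)" and "d \<in> S (int (Suc K)) ` J"
    then obtain j where j: "j \<in> J" "d = S (int (Suc K)) j" by auto
    have ad: "a * d \<in> I (int (Suc (Suc K)))" unfolding I_pos Ipos_Suc[of "Suc K"] using a j by (auto intro: ideal_prod_mem)
    show "a * d \<in> {e \<in> I (int (Suc (Suc K))). \<forall>h\<in>H. \<forall>y\<in>Mw (S (- int (Suc K)) ` m).
         act (monom (S (-1) h) (-1)) (act (monom e (int (Suc (Suc K)))) y) = 0}"
    proof (simp only: mem_Collect_eq, intro conjI ad ballI)
      fix h y assume h: "h \<in> H" and y: "y \<in> Mw (S (- int (Suc K)) ` m)"
      have "act (monom (a * d) (int (Suc (Suc K)))) y = act (monom a (int (Suc K))) (act (monom j 1) y)"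
        using comp[of a "int (Suc K)" j 1 y] a J_I1[OF j(1)] j I_pos'[of K] by simp
      moreover have "act (monom j 1) y \<in> Mw (S (- int K) ` m)"
        using weight[OF y J_I1[OF j(1)]] by (simp add: img_S)
      ultimately show "act (monom (S (-1) h) (-1)) (act (monom (a * d) (int (Suc (Suc K)))) y) = 0"
        using Suc.IH[OF a h] by simp
    qed
  qed
  then show ?case using Suc.prems by (auto simp: Ipos_Suc[of "Suc K"] simp del: of_nat_Suc)
qed

end

lemma comax:
  fixes p q :: "'r::comm_ring_1 set"
  assumes p: "maximal_ideal p" and q: "maximal_ideal q" and ne: "p \<noteq> q"
  shows "\<exists>a\<in>p. \<exists>b\<in>q. a + b = 1"
proof -
  define K where "K = {a + b | a b. a \<in> p \<and> b \<in> q}"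
  have pI: "is_ideal p" and qI: "is_ideal q" using p q by (auto simp: maximal_ideal_def)
  have KI: "is_ideal K" unfolding is_ideal_def K_def
  proof (intro conjI allI ballI impI)
    show "0 \<in> {a + b |a b. a \<in> p \<and> b \<in> q}" using ideal_0[OF pI] ideal_0[OF qI] by force
  next
    fix x y assume "x \<in> {a + b |a b. a \<in> p \<and> b \<in> q}" "y \<in> {a + b |a b. a \<in> p \<and> b \<in> q}"
    then obtain a b a' b' where "x = a + b" "y = a' + b'" "a \<in> p" "b \<in> q" "a' \<in> p" "b' \<in> q" by auto
    moreover have "a + a' \<in> p" "b + b' \<in> q" using calculation ideal_add[OF pI] ideal_add[OF qI] by auto
    moreover have "x + y = (a + a') + (b + b')" using calculation by (simp add: algebra_simps)
    ultimately show "x + y \<in> {a + b |a b. a \<in> p \<and> b \<in> q}" by blast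
  next
    fix r x assume "x \<in> {a + b |a b. a \<in> p \<and> b \<in> q}"
    then obtain a b where "x = a + b" "a \<in> p" "b \<in> q" by auto
    moreover have "r * a \<in> p" "r * b \<in> q" using \<open>a \<in> p\<close> \<open>b \<in> q\<close> ideal_multl[OF pI] ideal_multl[OF qI] by auto
    moreover have "r * x = r * a + r * b" using \<open>x = a + b\<close> by (simp add: distrib_left)
    ultimately show "r * x \<in> {a + b |a b. a \<in> p \<and> b \<in> q}" by blast
  qed
  have pK: "p \<subseteq> K" unfolding K_def using ideal_0[OF qI] by force
  have qK: "q \<subseteq> K" unfolding K_def using ideal_0[OF pI] by force
  have "K = p \<or> K = UNIV" using p KI pK by (auto simp: maximal_ideal_def)
  moreover have "K \<noteq> p"
  proof
    assume "K = p"
    then have "q \<subseteq> p" using qK by simp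
    then have "p = q \<or> p = UNIV" using q pI by (auto simp: maximal_ideal_def)
    then show False using ne p by (auto simp: maximal_ideal_def)
  qed
  ultimately have "1 \<in> K" by simp
  then show ?thesis unfolding K_def by auto
qed

lemma projector:
  fixes p :: "'r::comm_ring_1 set"
  assumes p: "maximal_ideal p" and Q: "finite Q" "\<forall>q\<in>Q. maximal_ideal q" "p \<notin> Q"
  shows "\<exists>r. r - 1 \<in> p \<and> (\<forall>q\<in>Q. r \<in> q)"
  using Q
proof (induction Q rule: finite_induct)
  case empty
  have "1 - 1 \<in> p" using p by (simp add: maximal_ideal_def ideal_0)
  then show ?case by blast
next
  case (insert q Q)
  then obtain r where r: "r - 1 \<in> p" "\<forall>q\<in>Q. r \<in> q" by auto
  have pI: "is_ideal p" using p by (simp add: maximal_ideal_def)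
  have qI: "is_ideal q" using insert by (simp add: maximal_ideal_def)
  obtain a b where ab: "a \<in> p" "b \<in> q" "a + b = 1"
    using comax[OF p, of q] insert by auto
  have bb: "b = 1 - a" using ab(3) by (simp add: eq_diff_eq add.commute)
  have eq: "r * b - 1 = (r - 1) - r * a" by (simp add: bb algebra_simps)
  have "(r - 1) - r * a \<in> p" by (rule ideal_diff[OF pI r(1) ideal_multl[OF pI ab(1)]])
  then have "r * b - 1 \<in> p" by (simp only: eq)
  moreover have "\<forall>q'\<in>insert q Q. r * b \<in> q'"
    using r(2) ab(2) qI insert by (auto simp: ideal_multl ideal_multr maximal_ideal_def)
  ultimately show ?case by blast
qed

context BRm begin

lemma img_ideal: "is_ideal X \<Longrightarrow> is_ideal (S a ` X)"
  unfolding is_ideal_def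
proof (intro conjI allI ballI impI)
  assume X: "0 \<in> X \<and> (\<forall>a\<in>X. \<forall>b\<in>X. a + b \<in> X) \<and> (\<forall>r a. a \<in> X \<longrightarrow> r * a \<in> X)"
  show "0 \<in> S a ` X" using X by (metis S_0 image_eqI)
  fix x y assume "x \<in> S a ` X" "y \<in> S a ` X"
  then obtain u v where "u \<in> X" "v \<in> X" "x = S a u" "y = S a v" by auto
  then show "x + y \<in> S a ` X" using X by (metis S_hom(1) image_eqI)
next
  assume X: "0 \<in> X \<and> (\<forall>a\<in>X. \<forall>b\<in>X. a + b \<in> X) \<and> (\<forall>r a. a \<in> X \<longrightarrow> r * a \<in> X)"
  fix r x assume "x \<in> S a ` X"
  then obtain u where u: "u \<in> X" "x = S a u" by auto
  then have "r * x = S a (S (- a) r * u)" by (simp add: S_hom S_inv)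
  moreover have "S (- a) r * u \<in> X" using X u by blast
  ultimately show "r * x \<in> S a ` X" by blast
qed

lemma max_img: "maximal_ideal p \<Longrightarrow> maximal_ideal (S k ` p)"
proof -
  assume p: "maximal_ideal p"
  have pI: "is_ideal p" using p by (simp add: maximal_ideal_def)
  have one: "1 \<notin> p" using p ideal_one pI by (auto simp: maximal_ideal_def)
  show ?thesis unfolding maximal_ideal_def
  proof (intro conjI allI impI)
    show "is_ideal (S k ` p)" by (rule img_ideal[OF pI])
    show "S k ` p \<noteq> UNIV"
    proof
      assume "S k ` p = UNIV"
      then obtain u where "u \<in> p" "1 = S k u" by (metis UNIV_I imageE)
      then have "u = 1" by (metis S_inv2 S_hom(3))
      then show False using one \<open>u \<in> p\<close> by simp
    qed
  next
    fix K assume K: "is_ideal K \<and> S k ` p \<subseteq> K"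
    have KI: "is_ideal (S (- k) ` K)" using img_ideal K by blast
    have "p \<subseteq> S (- k) ` K"
    proof
      fix x assume "x \<in> p"
      then have "S k x \<in> K" using K by blast
      moreover have "x = S (- k) (S k x)" by (simp add: S_inv2)
      ultimately show "x \<in> S (- k) ` K" by blast
    qed
    then have "S (- k) ` K = p \<or> S (- k) ` K = UNIV" using p KI by (auto simp: maximal_ideal_def)
    moreover have KK: "S k ` S (- k) ` K = K" by (simp add: img_S)
    moreover have UU: "S k ` UNIV = UNIV"
    proof -
      have "x \<in> S k ` UNIV" for x using S_inv[of k x] by (metis UNIV_I image_eqI)
      then show ?thesis by blast
    qed
    ultimately show "K = S k ` p \<or> K = UNIV" by metis
  qed
qed

end

locale BRo = BRm \<sigma> H J act n
  for \<sigma> :: "'r::idom \<Rightarrow> 'r" and H J :: "'r set"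
    and act :: "(int \<Rightarrow> 'r) \<Rightarrow> 'm::ab_group_add \<Rightarrow> 'm" and n :: nat +
  fixes Orb :: "'r set set" and m :: "'r set"
  assumes orb: "\<exists>m0. maximal_ideal m0 \<and> Orb = sigma_orbit \<sigma> m0"
    and fin: "finite Orb" and size: "card Orb = n"
    and simple: "simple_bmodule \<sigma> H J act"
    and mO: "m \<in> Orb" and brk: "is_break \<sigma> H J m"
begin

definition P :: "int \<Rightarrow> 'r set" where "P k = S k ` m"

lemma mmax: "maximal_ideal m" using brk by (simp add: is_break_def)
lemma Pmax: "maximal_ideal (P k)" unfolding P_def by (rule max_img[OF mmax])
lemma PI: "is_ideal (P k)" using Pmax by (simp add: maximal_ideal_def)
lemma P0: "P 0 = m" by (simp add: P_def)
lemma P_shift: "S a ` P b = P (a + b)" by (simp add: P_def img_S)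
lemma sig_P: "\<sigma> ` P b = P (b + 1)" using P_shift[of 1 b] by (simp add: S_one add.commute)
lemma P_mod: "P (k mod int n) = P k" by (simp add: P_def S_mod)
lemma P_eq: "a mod int n = b mod int n \<Longrightarrow> P a = P b" by (metis P_mod)

lemma Orb_range: "Orb = range P"
proof -
  obtain m0 where m0: "maximal_ideal m0" "Orb = sigma_orbit \<sigma> m0" using orb by blast
  obtain k0 where k0: "m = S k0 ` m0" using mO m0 by (auto simp: sigma_orbit_def)
  show ?thesis
  proof
    show "Orb \<subseteq> range P"
    proof
      fix q assume "q \<in> Orb"
      then obtain k where "q = S k ` m0" using m0 by (auto simp: sigma_orbit_def)
      moreover have "P (k - k0) = S (k - k0) ` m" by (rule P_def)
      moreover have "S (k - k0) ` m = S k ` m0" by (simp add: k0 img_S)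
      ultimately have "q = P (k - k0)" by simp
      then show "q \<in> range P" by blast
    qed
    show "range P \<subseteq> Orb"
    proof
      fix q assume "q \<in> range P"
      then obtain k where "q = P k" by blast
      moreover have "P k = S k ` m" by (rule P_def)
      moreover have "S k ` m = S (k + k0) ` m0" by (simp add: k0 img_S)
      ultimately have "q = S (k + k0) ` m0" by simp
      then show "q \<in> Orb" using m0 by (auto simp: sigma_orbit_def)
    qed
  qed
qed

lemma P_inj: "P a = P b \<Longrightarrow> a mod int n = b mod int n"
proof -
  assume eq: "P a = P b"
  have O: "Orb = (\<lambda>i. P (int i)) ` {..<n}"
  proof
    show "Orb \<subseteq> (\<lambda>i. P (int i)) ` {..<n}"
    proof
      fix q assume "q \<in> Orb"
      then obtain k where q: "q = P k" using Orb_range by blast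
      have "q = P (int (nat (k mod int n)))" using npos q P_mod by simp
      moreover have "nat (k mod int n) < n" using npos by (simp add: nat_less_iff)
      ultimately show "q \<in> (\<lambda>i. P (int i)) ` {..<n}" by blast
    qed
    show "(\<lambda>i. P (int i)) ` {..<n} \<subseteq> Orb" using Orb_range by blast
  qed
  have "inj_on (\<lambda>i. P (int i)) {..<n}"
    using inj_on_iff_eq_card[of "{..<n}" "\<lambda>i. P (int i)"] O size by simp
  moreover have "nat (a mod int n) \<in> {..<n}" "nat (b mod int n) \<in> {..<n}"
    using npos by (auto simp: nat_less_iff)
  moreover have "P (int (nat (a mod int n))) = P (int (nat (b mod int n)))"
    using eq npos P_mod by simp
  ultimately have "nat (a mod int n) = nat (b mod int n)" by (meson inj_onD)
  then show ?thesis using npos by (simp add: eq_nat_nat_iff)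
qed

lemma proj: "\<exists>r. r - 1 \<in> P c \<and> (\<forall>k. P k \<noteq> P c \<longrightarrow> r \<in> P k)"
proof -
  have "finite (Orb - {P c})" using fin by simp
  moreover have "\<forall>q\<in>Orb - {P c}. maximal_ideal q" using Orb_range Pmax by auto
  ultimately obtain r where "r - 1 \<in> P c" "\<forall>q\<in>Orb - {P c}. r \<in> q"
    using projector[OF Pmax, of "Orb - {P c}" c] by auto
  then show ?thesis using Orb_range by auto
qed

lemma hj: "h \<in> H \<Longrightarrow> j \<in> J \<Longrightarrow> h * j \<in> P 1"
proof -
  assume "h \<in> H" "j \<in> J"
  then have "h * j \<in> ideal_prod H J" by (rule ideal_prod_mem)
  moreover have "\<sigma> ` m \<in> S_B H J" using brk by (simp add: is_break_def)
  ultimately show ?thesis using sig_P[of 0] P0 by (auto simp: S_B_def)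
qed

lemma hj_m: "h \<in> H \<Longrightarrow> j \<in> J \<Longrightarrow> S (-1) (a * (h * j)) \<in> m"
proof -
  assume "h \<in> H" "j \<in> J"
  then have "a * (h * j) \<in> P 1" using hj PI ideal_multl by blast
  then have "S (-1) (a * (h * j)) \<in> P (-1 + 1)" using P_shift[of "-1" 1] by blast
  then show ?thesis by (simp add: P0)
qed

lemma hg_univ: "w \<noteq> 0 \<Longrightarrow> hg w = UNIV" using hg_UNIV[OF simple] .

end

context BRo begin

lemma wk_comp: "j \<in> J \<Longrightarrow> h \<in> H \<Longrightarrow> v \<in> Mw m \<Longrightarrow> act (monom (S (-1) h) (-1)) (act (monom j 1) v) = 0"
proof -
  assume j: "j \<in> J" and h: "h \<in> H" and v: "v \<in> Mw m"
  have "act (monom (S (-1) h) (-1)) (act (monom j 1) v) = act (monom (S (-1) h * S (-1) j) 0) v"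
    using comp[OF H_Im1[OF h] J_I1[OF j]] by simp
  also have "S (-1) h * S (-1) j = S (-1) (1 * (h * j))" by (simp add: S_hom)
  also have "act (monom (S (-1) (1 * (h * j))) 0) v = 0" using kill[OF v hj_m[OF h j]] .
  finally show ?thesis .
qed

lemma wP: "v \<in> Mw m \<Longrightarrow> j \<in> J \<Longrightarrow> act (monom j 1) v \<in> Mw (P 1)"
  using weight[of v m j 1] J_I1 by (simp add: P_def)

lemma claim1: "\<not> (J_break \<sigma> H J act m \<and> H_break \<sigma> H J act m)"
proof
  assume A: "J_break \<sigma> H J act m \<and> H_break \<sigma> H J act m"
  then obtain j v where j: "j \<in> J" and v: "v \<in> Mw m" and wne: "act (monom j 1) v \<noteq> 0"
    by (auto simp: J_break_def)
  have sm: "\<sigma> ` m = P 1" using sig_P[of 0] P0 by simp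
  obtain h0 w' where h0: "h0 \<in> H" and w': "w' \<in> Mw (P 1)" and ne': "act (monom (S (-1) h0) (-1)) w' \<noteq> 0"
    using A by (auto simp: H_break_def sm S_m1)
  define w where "w = act (monom j 1) v"
  have wP1: "w \<in> Mw (P 1)" using wP[OF v j] by (simp add: w_def)
  have wkill: "\<forall>h\<in>H. act (monom (S (-1) h) (-1)) w = 0"
    using wk_comp[OF j _ v] by (simp add: w_def)
  obtain r where r: "r - 1 \<in> P 1" "\<forall>k. P k \<noteq> P 1 \<longrightarrow> r \<in> P k" using proj by blast
  have mbr: "\<forall>h\<in>H. \<forall>j\<in>J. S (-1) (h * j) \<in> m" using hj_m[of _ _ 1] by simp
  have mI: "is_ideal m" using mmax by (simp add: maximal_ideal_def)
  have Phi: "\<forall>h\<in>H. act (monom (S (-1) h) (-1)) (act (monom r 0) x) = 0" if "x \<in> hg w" for x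
    using that
  proof (induction rule: hg.induct)
    case (gen c k)
    have rcI: "r * c \<in> I k" using gen.hyps I_ideal ideal_multl by blast
    have rc: "act (monom r 0) (act (monom c k) w) = act (monom (r * c) k) w"
      using comp[of r 0 c k w] gen.hyps by simp
    show ?case
    proof (cases "k mod int n = 0")
      case False
      have x: "act (monom c k) w \<in> Mw (P (k + 1))"
        using weight[OF wP1 gen.hyps] P_shift[of k 1] by simp
      have "P (k + 1) \<noteq> P 1"
      proof
        assume "P (k + 1) = P 1"
        then have "(k + 1) mod int n = 1 mod int n" by (rule P_inj)
        then have "(k + 1 - 1) mod int n = (1 - 1) mod int n" by (rule mod_diff_cong) simp
        then show False using False by simp
      qed
      then have "act (monom r 0) (act (monom c k) w) = 0" using kill[OF x] r(2) by blast
      then show ?thesis by (simp add: act_0v monom_BR H_Im1)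
    next
      case True
      consider "k = 0" | "k > 0" | "k < 0" by linarith
      then show ?thesis
      proof cases
        case 1
        show ?thesis
        proof
          fix h assume h: "h \<in> H"
          have "act (monom (r * c) k) w = act (monom (r * c * j) 1) v"
            using comp[of "r * c" k j 1 v] rcI J_I1[OF j] 1 by (simp add: w_def)
          then have "act (monom (S (-1) h) (-1)) (act (monom (r * c) k) w)
              = act (monom (S (-1) h * S (-1) (r * c * j)) 0) v"
            using comp[of "S (-1) h" "-1" "r * c * j" 1 v] H_Im1[OF h] ideal_multl[OF I_ideal J_I1[OF j], of "r * c"] 1
            by simp
          also have "S (-1) h * S (-1) (r * c * j) = S (-1) ((r * c) * (h * j))" by (simp add: S_hom algebra_simps)
          also have "act (monom (S (-1) ((r * c) * (h * j))) 0) v = 0" using kill[OF v hj_m[OF h j]] .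
          finally show "act (monom (S (-1) h) (-1)) (act (monom r 0) (act (monom c k) w)) = 0" using rc by simp
        qed
      next
        case 2
        have "k = int (Suc (nat k - 1))" using 2 by simp
        then obtain K where K: "k = int (Suc K)" by blast
        have e: "r * c \<in> Ipos \<sigma> J (Suc K)" using rcI K by (simp only: I_pos)
        have "(1 - k) mod int n = (1 - 0) mod int n" by (rule mod_diff_cong) (simp_all add: True)
        then have "P (- int K) = P 1" using K by (intro P_eq) simp
        then have y: "w \<in> Mw (S (- int K) ` m)" using wP1 by (simp add: P_def)
        show ?thesis using P1[OF mI mbr e _ y] rc K by simp
      next
        case 3
        have "k = - int (Suc (nat (- k) - 1))" using 3 by simp
        then obtain L where L: "k = - int (Suc L)" by blast
        have e: "r * c \<in> Ineg \<sigma> H (Suc L)" using rcI L by (simp only: I_neg)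
        have "act (monom (r * c) k) w = 0" using neg1[OF wkill e] L by simp
        then show ?thesis using rc by (simp add: act_0v monom_BR H_Im1)
      qed
    qed
  next
    case (add x y)
    then show ?case by (simp add: act_addv monom_BR H_Im1)
  qed
  have "w \<noteq> 0" using wne by (simp add: w_def)
  then have "w' \<in> hg w" using hg_univ by blast
  then have "act (monom (S (-1) h0) (-1)) (act (monom r 0) w') = 0" using Phi h0 by blast
  then show False using fix1[OF w' r(1)] ne' by simp
qed

end

lemma mod_pred_ne: "0 < (n::int) \<Longrightarrow> i mod n \<noteq> 0 \<Longrightarrow> (i - 1) mod n < n - 1"
proof -
  assume n: "0 < n" and i: "i mod n \<noteq> 0"
  have "((i - 1) mod n + 1) mod n = i mod n" by (simp add: mod_add_left_eq)
  moreover have "(i - 1) mod n < n" using n by simp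
  moreover have "(i - 1) mod n \<noteq> n - 1"
  proof
    assume "(i - 1) mod n = n - 1"
    then have "((i - 1) mod n + 1) mod n = 0" by simp
    then show False using i \<open>((i - 1) mod n + 1) mod n = i mod n\<close> by simp
  qed
  ultimately show ?thesis by linarith
qed

lemma mod_ge: "0 < (n::int) \<Longrightarrow> 0 < x \<Longrightarrow> x mod n = 0 \<Longrightarrow> n \<le> x"
  by (simp add: zdvd_imp_le mod_eq_0_iff_dvd)

context BRo begin

lemma claim2:
  assumes supp: "supp_R act \<subseteq> Orb" and Jb: "J_break \<sigma> H J act m"
  shows "(\<forall>m'\<in>Orb. is_break \<sigma> H J m' \<longrightarrow> J_break \<sigma> H J act m') \<and> supp_R act = Orb"
proof -
  obtain j v where j: "j \<in> J" and v: "v \<in> Mw m" and wne: "act (monom j 1) v \<noteq> 0"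
    using Jb by (auto simp: J_break_def)
  define w where "w = act (monom j 1) v"
  have wP1: "w \<in> Mw (P 1)" using wP[OF v j] by (simp add: w_def)
  have wkill: "\<forall>h\<in>H. act (monom (S (-1) h) (-1)) w = 0"
    using wk_comp[OF j _ v] by (simp add: w_def)
  have vne: "v \<noteq> 0" using wne act_0v[OF monom_BR[OF J_I1[OF j]]] by auto
  have nI: "0 < int n" using npos by simp
  have key: "\<exists>j'\<in>J. \<exists>v'\<in>Mw (P i). act (monom j' 1) v' \<noteq> 0" if i0: "i mod int n \<noteq> 0" for i
  proof (rule ccontr)
    assume "\<not> (\<exists>j'\<in>J. \<exists>v'\<in>Mw (P i). act (monom j' 1) v' \<noteq> 0)"
    then have hyp: "\<forall>j'\<in>J. \<forall>v'\<in>Mw (P i). act (monom j' 1) v' = 0" by blast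
    obtain r where r: "r - 1 \<in> P 0" "\<forall>k. P k \<noteq> P 0 \<longrightarrow> r \<in> P k" using proj by blast
    define l where "l = nat ((i - 1) mod int n)"
    have l_lt: "int l < int n - 1" using mod_pred_ne[OF nI i0] nI by (simp add: l_def)
    have li: "(int l + 1) mod int n = i mod int n" using nI by (simp add: l_def mod_add_left_eq)
    have Pl: "S (int l) ` P 1 = P i" using P_shift[of "int l" 1] P_eq[OF li] by simp
    have Phi: "act (monom r 0) x = 0" if "x \<in> hg w" for x
      using that
    proof (induction rule: hg.induct)
      case (gen c k)
      have x: "act (monom c k) w \<in> Mw (P (k + 1))"
        using weight[OF wP1 gen.hyps] P_shift[of k 1] by simp
      show ?case
      proof (cases "(k + 1) mod int n = 0")
        case False
        have "P (k + 1) \<noteq> P 0"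
        proof
          assume "P (k + 1) = P 0"
          then have "(k + 1) mod int n = 0 mod int n" by (rule P_inj)
          then show False using False by simp
        qed
        then show ?thesis using kill[OF x] r(2) by blast
      next
        case True
        show ?thesis
        proof (cases "k < 0")
          case True
          have "k = - int (Suc (nat (- k) - 1))" using True by simp
          then obtain L where L: "k = - int (Suc L)" by blast
          have e: "c \<in> Ineg \<sigma> H (Suc L)" using gen.hyps L by (simp only: I_neg)
          have "act (monom c k) w = 0" using neg1[OF wkill e] L by simp
          then show ?thesis by (simp add: act_0v monom_BR)
        next
          case False
          have kn: "int n \<le> k + 1" using mod_ge[OF nI _ True] False by simp
          have e: "c \<in> Ipos \<sigma> J (nat k)" using gen.hyps False by (simp add: Iseq_def)
          have "act (monom c (int (nat k))) w = 0"
            using posK[OF e wP1, of l] l_lt kn hyp Pl by simp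
          then show ?thesis using False by (simp add: act_0v monom_BR)
        qed
      qed
    next
      case (add x y)
      then show ?case by (simp add: act_addv monom_BR)
    qed
    have "w \<noteq> 0" using wne by (simp add: w_def)
    then have "v \<in> hg w" using hg_univ by blast
    then have "act (monom r 0) v = 0" by (rule Phi)
    moreover have "act (monom r 0) v = v" using fix1[of v "P 0" r] v r(1) P0 by simp
    ultimately show False using vne by simp
  qed
  have part1: "\<forall>m'\<in>Orb. is_break \<sigma> H J m' \<longrightarrow> J_break \<sigma> H J act m'"
  proof (intro ballI impI)
    fix m' assume m': "m' \<in> Orb" and b: "is_break \<sigma> H J m'"
    then obtain i where i: "m' = P i" using Orb_range by blast
    show "J_break \<sigma> H J act m'"
    proof (cases "i mod int n = 0")
      case True
      then have "m' = m" using i P_eq[of i 0] P0 by simp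
      then show ?thesis using Jb by simp
    next
      case False
      then show ?thesis using key[OF False] b i by (auto simp: J_break_def)
    qed
  qed
  have part2: "Orb \<subseteq> supp_R act"
  proof
    fix m' assume m': "m' \<in> Orb"
    then obtain i where i: "m' = P i" using Orb_range by blast
    have "Mw m' \<noteq> {0}"
    proof (cases "i mod int n = 0")
      case True
      then have "m' = m" using i P_eq[of i 0] P0 by simp
      then show ?thesis using v vne by auto
    next
      case False
      then obtain j' v' where "j' \<in> J" "v' \<in> Mw m'" "act (monom j' 1) v' \<noteq> 0" using key i by blast
      then have "v' \<noteq> 0" using act_0v[OF monom_BR[OF J_I1]] by auto
      then show ?thesis using \<open>v' \<in> Mw m'\<close> by auto
    qed
    then show "m' \<in> supp_R act" using Pmax i by (simp add: supp_R_def)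
  qed
  show ?thesis using part1 part2 supp by auto
qed

end

context BRo begin

lemma claim3:
  assumes supp: "supp_R act \<subseteq> Orb" and Hb: "H_break \<sigma> H J act m"
  shows "(\<forall>m'\<in>Orb. is_break \<sigma> H J m' \<longrightarrow> H_break \<sigma> H J act m') \<and> supp_R act = Orb"
proof -
  have sm: "\<sigma> ` m = P 1" using sig_P[of 0] P0 by simp
  obtain h0 w' where h0: "h0 \<in> H" and w': "w' \<in> Mw (P 1)" and une: "act (monom (S (-1) h0) (-1)) w' \<noteq> 0"
    using Hb by (auto simp: H_break_def sm S_m1)
  define u where "u = act (monom (S (-1) h0) (-1)) w'"
  have uP0: "u \<in> Mw (P 0)" using weight[OF w' H_Im1[OF h0]] P_shift[of "-1" 1] by (simp add: u_def)
  have ukill: "\<forall>j\<in>J. act (monom j 1) u = 0"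
  proof
    fix j assume j: "j \<in> J"
    have "act (monom j 1) u = act (monom (j * S 1 (S (-1) h0)) 0) w'"
      using comp[OF J_I1[OF j] H_Im1[OF h0]] by (simp add: u_def)
    also have "j * S 1 (S (-1) h0) = h0 * j" using S_inv[of 1 h0] by (simp add: mult.commute)
    also have "act (monom (h0 * j) 0) w' = 0" using kill[OF w' hj[OF h0 j]] .
    finally show "act (monom j 1) u = 0" .
  qed
  have w'ne: "w' \<noteq> 0" using une act_0v[OF monom_BR[OF H_Im1[OF h0]]] by auto
  have nI: "0 < int n" using npos by simp
  have key: "\<exists>h\<in>H. \<exists>y\<in>Mw (P (i + 1)). act (monom (S (-1) h) (-1)) y \<noteq> 0" if i0: "i mod int n \<noteq> 0" for i
  proof (rule ccontr)
    assume "\<not> (\<exists>h\<in>H. \<exists>y\<in>Mw (P (i + 1)). act (monom (S (-1) h) (-1)) y \<noteq> 0)"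
    then have hyp: "\<forall>h\<in>H. \<forall>y\<in>Mw (P (i + 1)). act (monom (S (-1) h) (-1)) y = 0" by blast
    obtain r where r: "r - 1 \<in> P 1" "\<forall>k. P k \<noteq> P 1 \<longrightarrow> r \<in> P k" using proj by blast
    define l where "l = nat ((- i - 1) mod int n)"
    have mi: "(- i) mod int n \<noteq> 0" using i0 by (simp add: mod_eq_0_iff_dvd)
    have l_lt: "int l < int n - 1" using mod_pred_ne[OF nI mi] nI by (simp add: l_def)
    have li: "(- int l) mod int n = (i + 1) mod int n"
    proof -
      have "(- int l) mod int n = (- ((- i - 1) mod int n)) mod int n" using nI by (simp add: l_def)
      also have "\<dots> = (- (- i - 1)) mod int n" by (simp add: mod_minus_eq)
      finally show ?thesis by (simp add: add.commute)
    qed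
    have Pl: "S (- int l) ` P 0 = P (i + 1)" using P_shift[of "- int l" 0] P_eq[OF li] by simp
    have Phi: "act (monom r 0) x = 0" if "x \<in> hg u" for x
      using that
    proof (induction rule: hg.induct)
      case (gen c k)
      have x: "act (monom c k) u \<in> Mw (P k)"
        using weight[OF uP0 gen.hyps] P_shift[of k 0] by simp
      show ?case
      proof (cases "k mod int n = 1 mod int n")
        case False
        have "P k \<noteq> P 1"
        proof
          assume "P k = P 1"
          then have "k mod int n = 1 mod int n" by (rule P_inj)
          then show False using False by simp
        qed
        then show ?thesis using kill[OF x] r(2) by blast
      next
        case True
        show ?thesis
        proof (cases "0 < k")
          case True
          have "k = int (Suc (nat k - 1))" using True by simp
          then obtain K where K: "k = int (Suc K)" by blast
          have e: "c \<in> Ipos \<sigma> J (Suc K)" using gen.hyps K by (simp only: I_pos)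
          have "act (monom c k) u = 0" using pos1[OF ukill e] K by simp
          then show ?thesis by (simp add: act_0v monom_BR)
        next
          case False
          define L where "L = nat (- k)"
          have kL: "k = - int L" using False by (simp add: L_def)
          have "(1 - k) mod int n = (1 - 1) mod int n" by (rule mod_diff_cong) (simp_all add: True)
          then have kn: "int n \<le> 1 - k" using mod_ge[OF nI] False by simp
          have e: "c \<in> Ineg \<sigma> H L" using gen.hyps kL by (simp only: I_neg)
          have "act (monom c (- int L)) u = 0"
            using negK[OF e uP0, of l] l_lt kn hyp Pl kL by simp
          then show ?thesis using kL by (simp add: act_0v monom_BR)
        qed
      qed
    next
      case (add x y)
      then show ?case by (simp add: act_addv monom_BR)
    qed
    have "u \<noteq> 0" using une by (simp add: u_def)
    then have "w' \<in> hg u" using hg_univ by blast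
    then have "act (monom r 0) w' = 0" by (rule Phi)
    moreover have "act (monom r 0) w' = w'" using fix1[OF w' r(1)] .
    ultimately show False using w'ne by simp
  qed
  have part1: "\<forall>m'\<in>Orb. is_break \<sigma> H J m' \<longrightarrow> H_break \<sigma> H J act m'"
  proof (intro ballI impI)
    fix m' assume m': "m' \<in> Orb" and b: "is_break \<sigma> H J m'"
    then obtain i where i: "m' = P i" using Orb_range by blast
    show "H_break \<sigma> H J act m'"
    proof (cases "i mod int n = 0")
      case True
      then have "m' = m" using i P_eq[of i 0] P0 by simp
      then show ?thesis using Hb by simp
    next
      case False
      then show ?thesis using key[OF False] b i sig_P[of i] by (auto simp: H_break_def S_m1)
    qed
  qed
  have part2: "Orb \<subseteq> supp_R act"
  proof
    fix m' assume m': "m' \<in> Orb"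
    then obtain i where i: "m' = P i" using Orb_range by blast
    have "Mw m' \<noteq> {0}"
    proof (cases "(i - 1) mod int n = 0")
      case True
      have "(i - 1 + 1) mod int n = (0 + 1) mod int n" by (rule mod_add_cong) (simp_all add: True)
      then have "i mod int n = 1 mod int n" by simp
      then have "m' = P 1" using i P_eq by blast
      then show ?thesis using w' w'ne by auto
    next
      case False
      then obtain h y where "h \<in> H" "y \<in> Mw (P (i - 1 + 1))" "act (monom (S (-1) h) (-1)) y \<noteq> 0"
        using key by blast
      then have "y \<noteq> 0" "y \<in> Mw m'" using act_0v[OF monom_BR[OF H_Im1]] i by auto
      then show ?thesis by auto
    qed
    then show "m' \<in> supp_R act" using Pmax i by (simp add: supp_R_def)
  qed
  show ?thesis using part1 part2 supp by auto
qed

end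

theorem lemma3p17:
  fixes \<phi> :: "'k::field \<Rightarrow> 'r::idom"
    and \<sigma> :: "'r \<Rightarrow> 'r"
    and H J :: "'r set"
    and act :: "(int \<Rightarrow> 'r) \<Rightarrow> 'm::ab_group_add \<Rightarrow> 'm"
    and Orb :: "'r set set"
    and n :: nat
    and m :: "'r set"
  assumes alg: "alg_struct \<phi>"
    and aut: "ring_aut \<sigma>"
    and klin: "\<forall>c. \<sigma> (\<phi> c) = \<phi> c"
    and H: "is_ideal H" and J: "is_ideal J"
    and nonzero: "\<forall>k. Iseq \<sigma> H J k \<noteq> {0}"
    and per: "\<sigma> ^^ n = id"
    and orb: "\<exists>m0. maximal_ideal m0 \<and> Orb = sigma_orbit \<sigma> m0"
    and fin: "finite Orb" and size: "card Orb = n"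
    and simple: "simple_bmodule \<sigma> H J act"
    and weight: "weight_module act"
    and supp: "supp_R act \<subseteq> Orb"
    and mO: "m \<in> Orb" and brk: "is_break \<sigma> H J m"
  shows "\<not> (J_break \<sigma> H J act m \<and> H_break \<sigma> H J act m) \<and>
         (J_break \<sigma> H J act m \<longrightarrow>
            (\<forall>m'\<in>Orb. is_break \<sigma> H J m' \<longrightarrow> J_break \<sigma> H J act m') \<and> supp_R act = Orb) \<and>
         (H_break \<sigma> H J act m \<longrightarrow>
            (\<forall>m'\<in>Orb. is_break \<sigma> H J m' \<longrightarrow> H_break \<sigma> H J act m') \<and> supp_R act = Orb)"
proof -
  have npos: "0 < n" using fin size mO card_gt_0_iff by auto
  have bm: "bmodule \<sigma> H J act" using simple by (simp add: simple_bmodule_def)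
  interpret BRo \<sigma> H J act n Orb m
    by (unfold_locales) (use aut H J per npos bm orb fin size simple mO brk in auto)
  show ?thesis using claim1 claim2[OF supp] claim3[OF supp] by blast
qed

end
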